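(* Let $a,b,c,d\in\mathbb{K}$ with $a\ne b$ and $c\ne d$, and let $\mathcal R_1=(1-a\tau)(1-b\tau)^{-1}$ and $\mathcal R_2=(1-c\tau)^{-1}(1-d\tau)$ in $\mathbb{K}(\tau)$. Then $\mathcal R_1=\mathcal R_2$ if and only if $c=b[1]\ln'(a-b)$ and $d=a[1]\ln'(a-b)$; equivalently, if and only if $a[1]=d/\ln'(c-d)$ and $b[1]=c/\ln'(c-d)$.
   Context: Fix $h\in\mathbb{C}^\times$. $\mathbb{K}=\mathbb{C}(x)$; for $f\in\mathbb{K}$, $f[i](x)=f(x-ih)$ and $\ln'(f)=f/f[1]$. $\mathbb{K}[\tau]$ is the ring of difference operators $\sum_ja_j\tau^j$ ($a_j\in\mathbb{K}$) with $\tau f=f[1]\tau$, and $\mathbb{K}(\tau)$ is its division ring of fractions. *)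

theory Defs
  imports "HOL-Computational_Algebra.Computational_Algebra"
begin

type_synonym K = "complex poly fract"

text \<open>Shift f[i](x) = f(x - i h), first on polynomials, then on rational functions.\<close>
definition pshift :: "complex \<Rightarrow> nat \<Rightarrow> complex poly \<Rightarrow> complex poly" where
  "pshift h i p = p \<circ>\<^sub>p [:- (of_nat i * h), 1:]"

definition kshift :: "complex \<Rightarrow> nat \<Rightarrow> K \<Rightarrow> K" where
  "kshift h i f = (SOME r. \<exists>p q. q \<noteq> 0 \<and> f = Fract p q \<and> r = Fract (pshift h i p) (pshift h i q))"

definition lnp :: "complex \<Rightarrow> K \<Rightarrow> K" where
  "lnp h f = f / kshift h 1 f"

text \<open>Skew formal power series K[[tau]] with tau f = f[1] tau: a series is the
  coefficient sequence of sum_n a_n tau^n.  The Ore division ring K(tau) embeds into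
  skew Laurent series, and the elements in question lie in K[[tau]].\<close>
type_synonym sser = "nat \<Rightarrow> K"

definition sone :: sser where "sone = (\<lambda>n. if n = 0 then 1 else 0)"
definition sconst :: "K \<Rightarrow> sser" where "sconst k = (\<lambda>n. if n = 0 then k else 0)"
definition stau :: sser where "stau = (\<lambda>n. if n = 1 then 1 else 0)"
definition ssub :: "sser \<Rightarrow> sser \<Rightarrow> sser" where "ssub f g = (\<lambda>n. f n - g n)"

definition smul :: "complex \<Rightarrow> sser \<Rightarrow> sser \<Rightarrow> sser" where
  "smul h f g = (\<lambda>n. \<Sum>i\<le>n. f i * kshift h i (g (n - i)))"

definition sinv :: "complex \<Rightarrow> sser \<Rightarrow> sser" where
  "sinv h f = (THE g. smul h f g = sone \<and> smul h g f = sone)"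

definition one_minus :: "complex \<Rightarrow> K \<Rightarrow> sser" where
  "one_minus h a = ssub sone (smul h (sconst a) stau)"

end

theory Submission
  imports Defs
begin

lemma pshift_nz: "q \<noteq> 0 \<Longrightarrow> pshift h i q \<noteq> 0"
  unfolding pshift_def by (subst pcompose_eq_0_iff) auto
lemma pshift_eq0[simp]: "pshift h i q = 0 \<longleftrightarrow> q = 0"
  using pshift_nz by (auto simp: pshift_def)
lemma pshift_mult[simp]: "pshift h i (p * q) = pshift h i p * pshift h i q"
  by (simp add: pshift_def pcompose_mult)
lemma pshift_add[simp]: "pshift h i (p + q) = pshift h i p + pshift h i q"
  by (simp add: pshift_def pcompose_add)
lemma pshift_diff[simp]: "pshift h i (p - q) = pshift h i p - pshift h i q"
  by (simp add: pshift_def pcompose_diff)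
lemma pshift_minus[simp]: "pshift h i (- p) = - pshift h i p"
  by (simp add: pshift_def pcompose_uminus)
lemma pshift_0[simp]: "pshift h i 0 = 0"
  by (simp add: pshift_def)
lemma pshift_1[simp]: "pshift h i 1 = 1"
  by (simp add: pshift_def pcompose_1)

lemma ks_Fract: assumes "q \<noteq> 0"
  shows "kshift h i (Fract p q) = Fract (pshift h i p) (pshift h i q)"
  unfolding kshift_def
proof (rule someI2)
  show "\<exists>p' q'. q' \<noteq> 0 \<and> Fract p q = Fract p' q' \<and> Fract (pshift h i p) (pshift h i q) = Fract (pshift h i p') (pshift h i q')"
    using assms by blast
next
  fix r
  assume "\<exists>p' q'. q' \<noteq> 0 \<and> Fract p q = Fract p' q' \<and> r = Fract (pshift h i p') (pshift h i q')"
  then obtain p' q' where q': "q' \<noteq> 0" and f: "Fract p q = Fract p' q'" and r: "r = Fract (pshift h i p') (pshift h i q')" by blast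
  then have e: "p * q' = p' * q" using assms by (simp add: eq_fract)
  have "pshift h i p * pshift h i q' = pshift h i p' * pshift h i q"
    using arg_cong[OF e, of "\<lambda>x. pshift h i x"] by simp
  then show "r = Fract (pshift h i p) (pshift h i q)" using r q' assms by (simp add: eq_fract)
qed

lemma ks_mult: "kshift h i (x * y) = kshift h i x * kshift h i y"
  by (cases x; cases y) (simp add: ks_Fract)

lemma ks_add: "kshift h i (x + y) = kshift h i x + kshift h i y"
  by (cases x; cases y) (simp add: ks_Fract)

lemma ks_diff: "kshift h i (x - y) = kshift h i x - kshift h i y"
  by (cases x; cases y) (simp add: ks_Fract)

lemma ks_minus: "kshift h i (- x) = - kshift h i x"
  by (cases x) (simp add: ks_Fract)

lemma ks_one[simp]: "kshift h i 1 = 1"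
  by (simp add: One_fract_def ks_Fract)

lemma ks_zero[simp]: "kshift h i 0 = 0"
  by (simp add: Zero_fract_def ks_Fract eq_fract)

lemma ks_eq0[simp]: "kshift h i x = 0 \<longleftrightarrow> x = 0"
proof (cases x)
  case (Fract p q)
  then show ?thesis
    by (auto simp: ks_Fract eq_fract Zero_fract_def)
qed

lemma ks_inverse: "kshift h i (inverse x) = inverse (kshift h i x)"
proof (cases x)
  case (Fract p q)
  then show ?thesis
    by (cases "p = 0") (auto simp: ks_Fract eq_fract Zero_fract_def)
qed

lemma ks_divide: "kshift h i (x / y) = kshift h i x / kshift h i y"
  by (simp add: divide_inverse ks_mult ks_inverse)

lemma ks_0[simp]: "kshift h 0 x = x"
  by (cases x) (simp add: ks_Fract pshift_def)

lemma pshift_comp: "pshift h i (pshift h j p) = pshift h (i + j) p"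
  by (simp add: pshift_def pcompose_assoc[symmetric] pcompose_pCons algebra_simps)

lemma ks_comp: "kshift h i (kshift h j x) = kshift h (i + j) x"
  by (cases x) (simp add: ks_Fract pshift_comp)


lemma om_eq: "one_minus h a n = (if n = 0 then 1 else if n = 1 then - a else 0)"
proof -
  have "smul h (sconst a) stau n = (if n = 1 then a else 0)"
  proof (cases n)
    case 0 then show ?thesis by (simp add: smul_def sconst_def stau_def)
  next
    case (Suc m)
    then show ?thesis unfolding smul_def
      by (simp only: sum.atMost_Suc_shift) (simp add: sconst_def stau_def)
  qed
  then show ?thesis by (simp add: one_minus_def ssub_def sone_def)
qed

lemma sum_two:
  fixes f :: "nat \<Rightarrow> K"
  assumes "j \<le> n" "k \<le> n" "j \<noteq> k" "\<And>i. i \<le> n \<Longrightarrow> i \<noteq> j \<Longrightarrow> i \<noteq> k \<Longrightarrow> f i = 0"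
  shows "(\<Sum>i\<le>n. f i) = f j + f k"
proof -
  have "(\<Sum>i\<le>n. f i) = (\<Sum>i\<in>{j,k}. f i)"
    by (rule sum.mono_neutral_right) (use assms in auto)
  then show ?thesis using assms by simp
qed

lemma smul_left0: "smul h (one_minus h a) g 0 = g 0"
  by (simp add: smul_def om_eq)

lemma smul_leftS: "smul h (one_minus h a) g (Suc m) = g (Suc m) - a * kshift h 1 (g m)"
proof -
  have "smul h (one_minus h a) g (Suc m) = one_minus h a 0 * kshift h 0 (g (Suc m - 0))
      + one_minus h a 1 * kshift h 1 (g (Suc m - 1))"
    unfolding smul_def by (rule sum_two) (auto simp: om_eq)
  then show ?thesis by (simp add: om_eq)
qed

lemma smul_right0: "smul h g (one_minus h a) 0 = g 0"
  by (simp add: smul_def om_eq)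

lemma smul_rightS: "smul h g (one_minus h d) (Suc m) = g (Suc m) - g m * kshift h m d"
proof -
  have "smul h g (one_minus h d) (Suc m) = g (Suc m) * kshift h (Suc m) (one_minus h d (Suc m - Suc m))
      + g m * kshift h m (one_minus h d (Suc m - m))"
    unfolding smul_def by (rule sum_two) (auto simp: om_eq)
  then show ?thesis by (simp add: om_eq ks_minus)
qed

definition Gi :: "complex \<Rightarrow> K \<Rightarrow> sser" where
  "Gi h b n = (\<Prod>k<n. kshift h k b)"

lemma ks_prod: "kshift h i (\<Prod>k\<in>A. f k) = (\<Prod>k\<in>A. kshift h i (f k))"
  by (induction A rule: infinite_finite_induct) (auto simp: ks_mult)

lemma Gi_0[simp]: "Gi h b 0 = 1" by (simp add: Gi_def)

lemma Gi_Suc1: "Gi h b (Suc m) = b * kshift h 1 (Gi h b m)"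
  unfolding Gi_def prod.lessThan_Suc_shift by (simp add: ks_prod ks_comp)

lemma Gi_Suc2: "Gi h b (Suc m) = Gi h b m * kshift h m b"
  by (simp add: Gi_def)

lemma sinv_om: "sinv h (one_minus h b) = Gi h b"
  unfolding sinv_def
proof (rule the_equality)
  show "smul h (one_minus h b) (Gi h b) = sone \<and> smul h (Gi h b) (one_minus h b) = sone"
  proof (intro conjI ext)
    fix n show "smul h (one_minus h b) (Gi h b) n = sone n"
      by (cases n) (simp_all add: smul_left0 smul_leftS sone_def Gi_Suc1)
  next
    fix n show "smul h (Gi h b) (one_minus h b) n = sone n"
      by (cases n) (simp_all add: smul_right0 smul_rightS sone_def Gi_Suc2)
  qed
next
  fix g assume "smul h (one_minus h b) g = sone \<and> smul h g (one_minus h b) = sone"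
  then have e: "\<And>n. smul h (one_minus h b) g n = sone n" by simp
  show "g = Gi h b"
  proof
    fix n show "g n = Gi h b n"
    proof (induction n)
      case 0 then show ?case using e[of 0] by (simp add: smul_left0 sone_def)
    next
      case (Suc m) then show ?case using e[of "Suc m"] by (simp add: smul_leftS sone_def Gi_Suc1)
    qed
  qed
qed


lemma ks_inj: "kshift h i x = kshift h i y \<Longrightarrow> x = y"
  using ks_eq0[of h i "x - y"] by (simp add: ks_diff)

lemma key:
  "smul h (one_minus h a) (sinv h (one_minus h b)) = smul h (sinv h (one_minus h c)) (one_minus h d)
   \<longleftrightarrow> (\<forall>m. (b - a) * kshift h 1 (Gi h b m) = Gi h c m * kshift h m (c - d))"
proof -
  have r1: "smul h (one_minus h a) (Gi h b) (Suc m) = (b - a) * kshift h 1 (Gi h b m)" for m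
    by (simp add: smul_leftS Gi_Suc1 algebra_simps)
  have r2: "smul h (Gi h c) (one_minus h d) (Suc m) = Gi h c m * kshift h m (c - d)" for m
    by (simp add: smul_rightS Gi_Suc2 ks_diff algebra_simps)
  have "smul h (one_minus h a) (Gi h b) = smul h (Gi h c) (one_minus h d) \<longleftrightarrow>
     (\<forall>n. smul h (one_minus h a) (Gi h b) n = smul h (Gi h c) (one_minus h d) n)"
    by (auto simp: fun_eq_iff)
  also have "\<dots> \<longleftrightarrow> (\<forall>m. smul h (one_minus h a) (Gi h b) (Suc m) = smul h (Gi h c) (one_minus h d) (Suc m))"
    by (metis not0_implies_Suc smul_left0 smul_right0 Gi_0)
  finally show ?thesis by (simp add: sinv_om r1 r2)
qed

lemma cond1:
  assumes ab: "a \<noteq> b"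
  shows "(\<forall>m. (b - a) * kshift h 1 (Gi h b m) = Gi h c m * kshift h m (c - d))
     \<longleftrightarrow> c = kshift h 1 b * lnp h (a - b) \<and> d = kshift h 1 a * lnp h (a - b)"
proof -
  define e where "e = b - a"
  have e0: "e \<noteq> 0" using ab by (simp add: e_def)
  have se0: "kshift h i e \<noteq> 0" for i using e0 by simp
  have me: "a - b = - e" by (simp add: e_def)
  have L: "lnp h (a - b) = e / kshift h 1 e"
    unfolding me by (simp add: lnp_def ks_minus)
  show ?thesis
  proof
    assume H: "\<forall>m. (b - a) * kshift h 1 (Gi h b m) = Gi h c m * kshift h m (c - d)"
    have h0: "e = c - d" using H[rule_format, of 0] by (simp add: e_def)
    have h1: "e * kshift h 1 b = c * kshift h 1 e" using H[rule_format, of 1]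
      by (simp add: e_def Gi_def h0[symmetric, unfolded e_def])
    have c: "c = kshift h 1 b * lnp h (a - b)" unfolding L using h1 se0[of 1]
      by (simp add: field_simps)
    have sa: "kshift h 1 a = kshift h 1 b - kshift h 1 e" by (simp add: e_def ks_diff)
    have "kshift h 1 a * lnp h (a - b) = kshift h 1 b * lnp h (a - b) - e"
      unfolding sa L using se0[of 1] by (simp add: field_simps)
    then have d: "d = kshift h 1 a * lnp h (a - b)" using c h0 by simp
    show "c = kshift h 1 b * lnp h (a - b) \<and> d = kshift h 1 a * lnp h (a - b)" using c d by simp
  next
    assume H: "c = kshift h 1 b * lnp h (a - b) \<and> d = kshift h 1 a * lnp h (a - b)"
    have sa: "kshift h 1 a = kshift h 1 b - kshift h 1 e" by (simp add: e_def ks_diff)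
  have ba: "kshift h 1 b - kshift h 1 a = kshift h 1 e" by (simp add: e_def ks_diff)
  have "c - d = (kshift h 1 b - kshift h 1 a) * lnp h (a - b)" using H by (simp add: algebra_simps)
  also have "\<dots> = e" unfolding ba L using se0[of 1] by simp
  finally have cd: "c - d = e" .
    have kc: "kshift h m c = kshift h (Suc m) b * kshift h m e / kshift h (Suc m) e" for m
      using H unfolding L by (simp add: ks_mult ks_divide ks_comp)
    show "\<forall>m. (b - a) * kshift h 1 (Gi h b m) = Gi h c m * kshift h m (c - d)"
    proof
      fix m show "(b - a) * kshift h 1 (Gi h b m) = Gi h c m * kshift h m (c - d)"
        unfolding cd e_def[symmetric]
      proof (induction m)
        case 0 then show ?case by simp
      next
        case (Suc m)
        have "e * kshift h 1 (Gi h b (Suc m)) = (e * kshift h 1 (Gi h b m)) * kshift h (Suc m) b"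
          by (simp add: Gi_Suc2 ks_mult ks_comp)
        also have "\<dots> = Gi h c m * kshift h m e * kshift h (Suc m) b" using Suc by simp
        also have "\<dots> = Gi h c m * kshift h m c * kshift h (Suc m) e"
          using se0[of "Suc m"] by (simp add: kc field_simps)
        also have "\<dots> = Gi h c (Suc m) * kshift h (Suc m) e" by (simp add: Gi_Suc2)
        finally show ?case .
      qed
    qed
  qed
qed

lemma cond2:
  assumes ab: "a \<noteq> b" and cd: "c \<noteq> d"
  shows "(c = kshift h 1 b * lnp h (a - b) \<and> d = kshift h 1 a * lnp h (a - b))
     \<longleftrightarrow> (kshift h 1 a = d / lnp h (c - d) \<and> kshift h 1 b = c / lnp h (c - d))"
proof
  assume H: "c = kshift h 1 b * lnp h (a - b) \<and> d = kshift h 1 a * lnp h (a - b)"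
  define e where "e = b - a"
  have e0: "e \<noteq> 0" using ab by (simp add: e_def)
  have se0: "kshift h i e \<noteq> 0" for i using e0 by simp
  have me: "a - b = - e" by (simp add: e_def)
  have L: "lnp h (a - b) = e / kshift h 1 e"
    unfolding me by (simp add: lnp_def ks_minus)
  have sa: "kshift h 1 a = kshift h 1 b - kshift h 1 e" by (simp add: e_def ks_diff)
  have ba: "kshift h 1 b - kshift h 1 a = kshift h 1 e" by (simp add: e_def ks_diff)
  have "c - d = (kshift h 1 b - kshift h 1 a) * lnp h (a - b)" using H by (simp add: algebra_simps)
  also have "\<dots> = e" unfolding ba L using se0[of 1] by simp
  finally have cde: "c - d = e" .
  have L': "lnp h (c - d) = e / kshift h 1 e" by (simp add: cde lnp_def)
  show "kshift h 1 a = d / lnp h (c - d) \<and> kshift h 1 b = c / lnp h (c - d)"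
    using H e0 se0[of 1] unfolding L L' by (simp add: field_simps)
next
  assume H: "kshift h 1 a = d / lnp h (c - d) \<and> kshift h 1 b = c / lnp h (c - d)"
  define f where "f = c - d"
  have f0: "f \<noteq> 0" using cd by (simp add: f_def)
  have sf0: "kshift h i f \<noteq> 0" for i using f0 by simp
  have L': "lnp h (c - d) = f / kshift h 1 f" by (simp add: lnp_def f_def)
  have "kshift h 1 (a - b) = (d - c) / lnp h (c - d)" using H by (simp add: ks_diff diff_divide_distrib)
  also have "\<dots> = kshift h 1 (d - c)" unfolding L' using f0 sf0[of 1]
    by (simp add: f_def ks_diff field_simps)
  finally have "a - b = d - c" by (rule ks_inj)
  then have amb: "a - b = - (c - d)" by simp
  have L: "lnp h (a - b) = lnp h (c - d)"
    unfolding lnp_def amb ks_minus by (simp only: divide_minus_left divide_minus_right minus_minus)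
  have Ln: "lnp h (c - d) \<noteq> 0" using f0 sf0[of 1] unfolding L' by simp
  show "c = kshift h 1 b * lnp h (a - b) \<and> d = kshift h 1 a * lnp h (a - b)"
    using H Ln unfolding L by simp
qed

theorem lemma2p2:
  fixes h :: complex and a b c d :: K
  assumes "h \<noteq> 0" and "a \<noteq> b" and "c \<noteq> d"
  defines "R1 \<equiv> smul h (one_minus h a) (sinv h (one_minus h b))"
      and "R2 \<equiv> smul h (sinv h (one_minus h c)) (one_minus h d)"
  shows "(R1 = R2 \<longleftrightarrow> c = kshift h 1 b * lnp h (a - b) \<and> d = kshift h 1 a * lnp h (a - b))
       \<and> (R1 = R2 \<longleftrightarrow> kshift h 1 a = d / lnp h (c - d) \<and> kshift h 1 b = c / lnp h (c - d))"
  unfolding R1_def R2_def key cond1[OF assms(2)] cond2[OF assms(2,3)] by simp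

end
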